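(* Let $\Phi$ be a Young function, $\varphi\in\mathcal{G}^{\rm dec}_1$, and let $\psi:\mathbb{R}^n\to\mathbb{R}^n$ be measurable. Then $C_\psi$ is bounded on the weak Orlicz–Morrey space $\mathrm{w}\mathcal{M}_\Phi^\varphi(\mathbb{R}^n)$ if and only if there exists a constant $K>0$ such that for all measurable sets $A\subset\mathbb{R}^n$, \[ \|\chi_{\psi^{-1}(A)}\|_{\mathcal{M}_\Phi^\varphi}\le K\|\chi_A\|_{\mathcal{M}_\Phi^\varphi}. \]
   Context: A Young function is a convex $\Phi:[0,\infty)\to[0,\infty)$ with $\Phi(0)=0$, $\lim_{t\to\infty}\Phi(t)=\infty$. $\mathcal{G}^{\rm dec}_1$ is the set of $\varphi:(0,\infty)\to(0,\infty)$ that are almost decreasing (there is $C>0$ with $C\varphi(r)\ge\varphi(s)$ for $r<s$) and submultiplicative (there is $C>0$ with $\varphi(rs)\le C\varphi(r)\varphi(s)$). For a ball $B=B(a,r)$: $\|f\|_{\Phi,B}=\inf\{\lambda>0:\frac1{|B|}\int_B\Phi(|f|/\lambda)\le1\}$ and $\|f\|_{\mathcal{M}_\Phi^\varphi}=\sup_{a,r}\frac1{\varphi(r)}\|f\|_{\Phi,B(a,r)}$. For measurable $A$, $f$ and $t>0$, $m(A,f,t)=|\{x\in A:|f(x)|>t\}|$. Define $\|f\|_{\Phi,B,\mathrm{weak}}=\inf\{\lambda>0:\sup_{t>0}\frac1{|B|}\Phi(t)\,m(B,f/\lambda,t)\le1\}$ and $\mathrm{w}\mathcal{M}_\Phi^\varphi(\mathbb{R}^n)$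 as the set of measurable $f$ with $\|f\|_{\mathrm{w}\mathcal{M}_\Phi^\varphi}=\sup_{a\in\mathbb{R}^n,r>0}\frac1{\varphi(r)}\|f\|_{\Phi,B(a,r),\mathrm{weak}}<\infty$. $\chi_A$ is the characteristic function of $A$ and $C_\psi f=f\circ\psi$. *)

theory Defs
  imports "HOL-Analysis.Analysis"
begin

definition young_function :: "(real \<Rightarrow> real) \<Rightarrow> bool" where
  "young_function \<Phi> \<longleftrightarrow> convex_on {0..} \<Phi> \<and> \<Phi> 0 = 0 \<and> (\<forall>t\<ge>0. \<Phi> t \<ge> 0)
     \<and> filterlim \<Phi> at_top at_top"

definition G_dec_1 :: "(real \<Rightarrow> real) \<Rightarrow> bool" where
  "G_dec_1 \<phi> \<longleftrightarrow> (\<forall>r>0. \<phi> r > 0)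
     \<and> (\<exists>C>0. \<forall>r s. 0 < r \<longrightarrow> r < s \<longrightarrow> C * \<phi> r \<ge> \<phi> s)
     \<and> (\<exists>C>0. \<forall>r s. 0 < r \<longrightarrow> 0 < s \<longrightarrow> \<phi> (r * s) \<le> C * \<phi> r * \<phi> s)"

text \<open>Luxemburg-type norm on a set B (values in [0,oo]; Inf of the empty set is oo).\<close>
definition orlicz_norm_on :: "(real \<Rightarrow> real) \<Rightarrow> ('a::euclidean_space) set \<Rightarrow> ('a \<Rightarrow> real) \<Rightarrow> ennreal" where
  "orlicz_norm_on \<Phi> B f = Inf {ennreal l | l. l > 0 \<and>
      (\<integral>\<^sup>+ x\<in>B. ennreal (\<Phi> (\<bar>f x\<bar> / l)) \<partial>lebesgue) / emeasure lebesgue B \<le> 1}"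

definition distr_m :: "('a::euclidean_space) set \<Rightarrow> ('a \<Rightarrow> real) \<Rightarrow> real \<Rightarrow> ennreal" where
  "distr_m A f t = emeasure lebesgue {x\<in>A. \<bar>f x\<bar> > t}"

definition weak_orlicz_norm_on :: "(real \<Rightarrow> real) \<Rightarrow> ('a::euclidean_space) set \<Rightarrow> ('a \<Rightarrow> real) \<Rightarrow> ennreal" where
  "weak_orlicz_norm_on \<Phi> B f = Inf {ennreal l | l. l > 0 \<and>
      (SUP t\<in>{0<..}. ennreal (\<Phi> t) * distr_m B (\<lambda>x. f x / l) t / emeasure lebesgue B) \<le> 1}"

definition orlicz_morrey_norm :: "(real \<Rightarrow> real) \<Rightarrow> (real \<Rightarrow> real) \<Rightarrow> ('a::euclidean_space \<Rightarrow> real) \<Rightarrow> ennreal" where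
  "orlicz_morrey_norm \<Phi> \<phi> f = (SUP (a, r)\<in>UNIV \<times> {0<..}. orlicz_norm_on \<Phi> (ball a r) f / ennreal (\<phi> r))"

definition weak_orlicz_morrey_norm :: "(real \<Rightarrow> real) \<Rightarrow> (real \<Rightarrow> real) \<Rightarrow> ('a::euclidean_space \<Rightarrow> real) \<Rightarrow> ennreal" where
  "weak_orlicz_morrey_norm \<Phi> \<phi> f = (SUP (a, r)\<in>UNIV \<times> {0<..}. weak_orlicz_norm_on \<Phi> (ball a r) f / ennreal (\<phi> r))"

definition weak_orlicz_morrey :: "(real \<Rightarrow> real) \<Rightarrow> (real \<Rightarrow> real) \<Rightarrow> ('a::euclidean_space \<Rightarrow> real) set" where
  "weak_orlicz_morrey \<Phi> \<phi> = {f. f \<in> borel_measurable lebesgue \<and> weak_orlicz_morrey_norm \<Phi> \<phi> f < \<infinity>}"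

definition comp_bounded_weak_OM :: "(real \<Rightarrow> real) \<Rightarrow> (real \<Rightarrow> real) \<Rightarrow> ('a::euclidean_space \<Rightarrow> 'a) \<Rightarrow> bool" where
  "comp_bounded_weak_OM \<Phi> \<phi> \<psi> \<longleftrightarrow> (\<exists>C>0. \<forall>f \<in> weak_orlicz_morrey \<Phi> \<phi>.
      f \<circ> \<psi> \<in> weak_orlicz_morrey \<Phi> \<phi> \<and>
      weak_orlicz_morrey_norm \<Phi> \<phi> (f \<circ> \<psi>) \<le> ennreal C * weak_orlicz_morrey_norm \<Phi> \<phi> f)"

end

theory Submission
  imports Defs
begin

lemma young_mono:
  assumes "young_function \<Phi>" "0 \<le> a" "a \<le> b"
  shows "\<Phi> a \<le> \<Phi> b"
proof (cases "b = 0")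
  case True then show ?thesis using assms by simp
next
  case False
  have c: "convex_on {0..} \<Phi>" and z: "\<Phi> 0 = 0" and nn: "\<Phi> b \<ge> 0"
    using assms unfolding young_function_def by auto
  define t where "t = a / b"
  have b: "b > 0" using False assms by simp
  have t: "0 \<le> t" "t \<le> 1" using assms b by (auto simp: t_def field_simps)
  have "\<Phi> ((1 - t) *\<^sub>R 0 + t *\<^sub>R b) \<le> (1 - t) * \<Phi> 0 + t * \<Phi> b"
    using convex_onD[OF c, of t 0 b] t b by auto
  moreover have "(1 - t) *\<^sub>R 0 + t *\<^sub>R b = a" using b by (simp add: t_def)
  ultimately have "\<Phi> a \<le> t * \<Phi> b" using z by simp
  also have "\<dots> \<le> \<Phi> b" using t nn by (simp add: mult_left_le_one_le)
  finally show ?thesis .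
qed

lemma N_ind:
  assumes "young_function \<Phi>" "E \<inter> B \<in> sets lebesgue"
  shows "orlicz_norm_on \<Phi> B (indicator E) = Inf {ennreal m | m. m > 0 \<and>
     ennreal (\<Phi> (1/m)) * emeasure lebesgue (E \<inter> B) / emeasure lebesgue B \<le> 1}"
proof -
  have z: "\<Phi> 0 = 0" using assms unfolding young_function_def by auto
  have "(\<integral>\<^sup>+ x\<in>B. ennreal (\<Phi> (\<bar>indicator E x\<bar> / m)) \<partial>lebesgue)
      = ennreal (\<Phi> (1/m)) * emeasure lebesgue (E \<inter> B)" for m :: real
  proof -
    have "(\<integral>\<^sup>+ x\<in>B. ennreal (\<Phi> (\<bar>indicator E x\<bar> / m)) \<partial>lebesgue)
       = (\<integral>\<^sup>+ x. ennreal (\<Phi> (1/m)) * indicator (E \<inter> B) x \<partial>lebesgue)"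
      by (rule nn_integral_cong) (auto simp: indicator_def z)
    also have "\<dots> = ennreal (\<Phi> (1/m)) * emeasure lebesgue (E \<inter> B)"
      using assms(2) by (rule nn_integral_cmult_indicator)
    finally show ?thesis .
  qed
  then show ?thesis unfolding orlicz_norm_on_def by simp
qed


lemma W_eq:
  assumes Y: "young_function \<Phi>" and B: "B \<in> sets lebesgue"
    and f: "f \<in> borel_measurable lebesgue"
  shows "weak_orlicz_norm_on \<Phi> B f =
    (SUP s\<in>{0<..}. ennreal s * orlicz_norm_on \<Phi> B (indicator {x. \<bar>f x\<bar> > s}))"
proof -
  define \<mu> where "\<mu> = emeasure lebesgue B"
  define e where "e s = emeasure lebesgue ({x. \<bar>f x\<bar> > s} \<inter> B)" for s
  have abs_meas: "(\<lambda>x. \<bar>f x\<bar>) \<in> borel_measurable lebesgue" using f by measurable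
  have meas: "{x. \<bar>f x\<bar> > s} \<inter> B \<in> sets lebesgue" for s
  proof -
    have "{w \<in> space lebesgue. s < \<bar>f w\<bar>} \<in> sets lebesgue"
      using borel_measurable_iff_greater[of "\<lambda>x. \<bar>f x\<bar>" lebesgue] abs_meas by blast
    then show ?thesis using B by auto
  qed
  define Q where "Q s l \<longleftrightarrow> ennreal (\<Phi> (s / l)) * e s / \<mu> \<le> 1" for s l
  have N: "orlicz_norm_on \<Phi> B (indicator {x. \<bar>f x\<bar> > s}) =
      Inf {ennreal m | m. m > 0 \<and> Q s (s * m)}" if "s > 0" for s
    unfolding N_ind[OF Y meas] Q_def e_def \<mu>_def using that by simp
  have Wc: "(SUP t\<in>{0<..}. ennreal (\<Phi> t) * distr_m B (\<lambda>x. f x / l) t / \<mu>) \<le> 1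
      \<longleftrightarrow> (\<forall>s>0. Q s l)" if l: "l > 0" for l
  proof -
    have d: "distr_m B (\<lambda>x. f x / l) (s / l) = e s" for s
    proof -
      have "{x \<in> B. \<bar>f x / l\<bar> > s / l} = {x. \<bar>f x\<bar> > s} \<inter> B"
        using l by (auto simp: divide_strict_right_mono abs_divide divide_less_cancel)
      then show ?thesis unfolding distr_m_def e_def by simp
    qed
    have "(\<forall>t>0. ennreal (\<Phi> t) * distr_m B (\<lambda>x. f x / l) t / \<mu> \<le> 1) \<longleftrightarrow> (\<forall>s>0. Q s l)"
    proof
      assume H: "\<forall>t>0. ennreal (\<Phi> t) * distr_m B (\<lambda>x. f x / l) t / \<mu> \<le> 1"
      show "\<forall>s>0. Q s l"
      proof (intro allI impI)
        fix s :: real assume "s > 0"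
        then show "Q s l" using H[rule_format, of "s/l"] l d[of s] by (simp add: Q_def)
      qed
    next
      assume H: "\<forall>s>0. Q s l"
      show "\<forall>t>0. ennreal (\<Phi> t) * distr_m B (\<lambda>x. f x / l) t / \<mu> \<le> 1"
      proof (intro allI impI)
        fix t :: real assume "t > 0"
        then have "Q (t * l) l" using H l by simp
        then show "ennreal (\<Phi> t) * distr_m B (\<lambda>x. f x / l) t / \<mu> \<le> 1"
          using d[of "t*l"] l by (simp add: Q_def)
      qed
    qed
    then show ?thesis by (simp add: SUP_le_iff Ball_def)
  qed
  have W: "weak_orlicz_norm_on \<Phi> B f = Inf {ennreal l | l. l > 0 \<and> (\<forall>s>0. Q s l)}"
    unfolding weak_orlicz_norm_on_def \<mu>_def[symmetric]
    by (rule arg_cong[where f=Inf]) (use Wc in blast)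
  have Qmono: "Q s x" if "Q s l" "0 < l" "l \<le> x" "0 < s" for s l x
  proof -
    have "\<Phi> (s / x) \<le> \<Phi> (s / l)"
      using that by (intro young_mono[OF Y]) (auto simp: divide_left_mono)
    then have "ennreal (\<Phi> (s / x)) * e s / \<mu> \<le> ennreal (\<Phi> (s / l)) * e s / \<mu>"
      by (intro divide_right_mono_ennreal mult_right_mono ennreal_leI) auto
    then show ?thesis using that(1) unfolding Q_def by simp
  qed
  show ?thesis
  proof (rule antisym)
    show "weak_orlicz_norm_on \<Phi> B f \<le>
      (SUP s\<in>{0<..}. ennreal s * orlicz_norm_on \<Phi> B (indicator {x. \<bar>f x\<bar> > s}))"
      (is "_ \<le> ?S")
    proof (rule dense_ge)
      fix y assume y: "?S < y"
      show "weak_orlicz_norm_on \<Phi> B f \<le> y"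
      proof (cases y)
        case (real x)
        have x0: "x > 0"
        proof -
          have "0 \<le> ?S" by simp
          then have "0 < y" using y by (rule le_less_trans)
          then show ?thesis using real by simp
        qed
        have "\<forall>s>0. Q s x"
        proof (intro allI impI)
          fix s :: real assume s: "s > 0"
          have "ennreal s * orlicz_norm_on \<Phi> B (indicator {x. \<bar>f x\<bar> > s}) \<le> ?S"
            using s by (intro SUP_upper) simp
          then have lt: "ennreal s * Inf {ennreal m | m. m > 0 \<and> Q s (s * m)} < ennreal x"
            using y real N[OF s] by simp
          have "Inf {ennreal m | m. m > 0 \<and> Q s (s * m)} < ennreal (x / s)"
          proof (rule ccontr)
            assume "\<not> ?thesis"
            then have "ennreal (x / s) \<le> Inf {ennreal m | m. m > 0 \<and> Q s (s * m)}" by simp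
            then have "ennreal s * ennreal (x / s) \<le> ennreal s * Inf {ennreal m | m. m > 0 \<and> Q s (s * m)}"
              by (rule mult_left_mono) simp
            moreover have "ennreal s * ennreal (x / s) = ennreal x"
              proof -
                have "ennreal s * ennreal (x / s) = ennreal (s * (x / s))" by (rule ennreal_mult'[symmetric]) (use s in simp)
                also have "s * (x / s) = x" using s by simp
                finally show ?thesis .
              qed
            ultimately show False using lt by simp
          qed
          then obtain m where m: "m > 0" "Q s (s * m)" "ennreal m < ennreal (x / s)"
            unfolding Inf_less_iff by blast
          then have "m < x / s" using x0 s by (simp add: ennreal_less_iff)
          then have "s * m < x" using s by (simp add: less_divide_eq mult.commute)
          then show "Q s x" using Qmono[OF m(2)] m s by simp
        qed
        then have "weak_orlicz_norm_on \<Phi> B f \<le> ennreal x"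
          unfolding W by (intro Inf_lower) (use x0 in blast)
        then show ?thesis using real by simp
      qed simp
    qed
  next
    show "(SUP s\<in>{0<..}. ennreal s * orlicz_norm_on \<Phi> B (indicator {x. \<bar>f x\<bar> > s}))
       \<le> weak_orlicz_norm_on \<Phi> B f"
    proof (rule SUP_least)
      fix s :: real assume "s \<in> {0<..}"
      then have s: "s > 0" by simp
      show "ennreal s * orlicz_norm_on \<Phi> B (indicator {x. \<bar>f x\<bar> > s}) \<le> weak_orlicz_norm_on \<Phi> B f"
        unfolding W N[OF s]
      proof (rule Inf_greatest)
        fix z assume "z \<in> {ennreal l | l. l > 0 \<and> (\<forall>s>0. Q s l)}"
        then obtain l where l: "z = ennreal l" "l > 0" "\<forall>s>0. Q s l" by blast
        have q: "Q s (s * (l / s))" using l(3) s by simp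
        have p: "l / s > 0" using l(2) s by simp
        have "ennreal (l / s) \<in> {ennreal m | m. m > 0 \<and> Q s (s * m)}" using p q by blast
        then have "Inf {ennreal m | m. m > 0 \<and> Q s (s * m)} \<le> ennreal (l / s)"
          by (rule Inf_lower)
        then have "ennreal s * Inf {ennreal m | m. m > 0 \<and> Q s (s * m)} \<le> ennreal s * ennreal (l / s)"
          by (rule mult_left_mono) simp
        moreover have "ennreal s * ennreal (l / s) = ennreal (s * (l / s))" by (rule ennreal_mult'[symmetric]) (use s in simp)
        moreover have "s * (l / s) = l" using s by simp
        ultimately show "ennreal s * Inf {ennreal m | m. m > 0 \<and> Q s (s * m)} \<le> z" using l(1) by simp
      qed
    qed
  qed
qed


lemma wM_eq:
  fixes f :: "'a::euclidean_space \<Rightarrow> real"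
  assumes Y: "young_function \<Phi>" and f: "f \<in> borel_measurable lebesgue"
  shows "weak_orlicz_morrey_norm \<Phi> \<phi> f =
    (SUP s\<in>{0<..}. ennreal s * orlicz_morrey_norm \<Phi> \<phi> (indicator {x. \<bar>f x\<bar> > s}))"
proof -
  let ?N = "\<lambda>s a r. orlicz_norm_on \<Phi> (ball a r) (indicator {x. \<bar>f x\<bar> > s} :: 'a \<Rightarrow> real)"
  have b: "ball a r \<in> sets lebesgue" for a :: 'a and r by simp
  have eq: "(\<lambda>p. case p of (a, r) \<Rightarrow> weak_orlicz_norm_on \<Phi> (ball a r) f / ennreal (\<phi> r))
     = (\<lambda>p. SUP s\<in>{0<..}. ennreal s * (case p of (a, r) \<Rightarrow> ?N s a r / ennreal (\<phi> r)))"
    by (auto simp: fun_eq_iff W_eq[OF Y b f] divide_ennreal_def SUP_mult_right_ennreal mult.assoc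
        split: prod.splits)
  have "weak_orlicz_morrey_norm \<Phi> \<phi> f =
     (SUP p\<in>UNIV \<times> {0<..}. SUP s\<in>{0<..}. ennreal s * (case p of (a, r) \<Rightarrow> ?N s a r / ennreal (\<phi> r)))"
    unfolding weak_orlicz_morrey_norm_def eq ..
  also have "\<dots> = (SUP s\<in>{0<..}. SUP p\<in>UNIV \<times> {0<..}. ennreal s * (case p of (a, r) \<Rightarrow> ?N s a r / ennreal (\<phi> r)))"
    by (rule SUP_commute)
  also have "\<dots> = (SUP s\<in>{0<..}. ennreal s * orlicz_morrey_norm \<Phi> \<phi> (indicator {x. \<bar>f x\<bar> > s}))"
    unfolding orlicz_morrey_norm_def SUP_mult_left_ennreal ..
  finally show ?thesis .
qed


lemma N_empty:
  assumes Y: "young_function \<Phi>"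
  shows "orlicz_norm_on \<Phi> B (indicator {} :: 'a::euclidean_space \<Rightarrow> real) = 0"
proof -
  have "orlicz_norm_on \<Phi> B (indicator {} :: 'a \<Rightarrow> real) = Inf {ennreal m | m. m > 0}"
    using N_ind[OF Y, of "{}" B] by simp
  also have "\<dots> \<le> 0"
  proof (rule ennreal_le_epsilon)
    fix e :: real assume "0 < e"
    then have "ennreal e \<in> {ennreal m | m. m > 0}" by blast
    then have "Inf {ennreal m | m. m > 0} \<le> ennreal e" by (rule Inf_lower)
    then show "Inf {ennreal m | m. m > 0} \<le> 0 + ennreal e" by simp
  qed
  finally show ?thesis by simp
qed

lemma M_empty:
  assumes Y: "young_function \<Phi>"
  shows "orlicz_morrey_norm \<Phi> \<phi> (indicator {} :: 'a::euclidean_space \<Rightarrow> real) = 0"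
  unfolding orlicz_morrey_norm_def by (simp only: N_empty[OF Y] split_def) (simp add: divide_ennreal_def)

lemma SUP_ennreal_01: "(SUP s\<in>{0<..<1::real}. ennreal s) = 1"
proof (rule antisym)
  show "(SUP s\<in>{0<..<1::real}. ennreal s) \<le> 1" by (rule SUP_least) simp
next
  show "1 \<le> (SUP s\<in>{0<..<1::real}. ennreal s)"
  proof (rule dense_le)
    fix y :: ennreal assume y: "y < 1"
    then obtain r where r: "y = ennreal r" "0 \<le> r" by (cases y) auto
    then have r1: "r < 1" using y by (simp add: ennreal_less_iff)
    have "ennreal ((r + 1) / 2) \<le> (SUP s\<in>{0<..<1::real}. ennreal s)"
      by (rule SUP_upper) (use r r1 in auto)
    moreover have "y \<le> ennreal ((r + 1) / 2)" using r r1 by simp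
    ultimately show "y \<le> (SUP s\<in>{0<..<1::real}. ennreal s)" by (rule order_trans[rotated])
  qed
qed

lemma wM_ind:
  fixes A :: "'a::euclidean_space set"
  assumes Y: "young_function \<Phi>" and A: "A \<in> sets lebesgue"
  shows "weak_orlicz_morrey_norm \<Phi> \<phi> (indicator A :: 'a \<Rightarrow> real) = orlicz_morrey_norm \<Phi> \<phi> (indicator A :: 'a \<Rightarrow> real)"
proof -
  let ?M = "orlicz_morrey_norm \<Phi> \<phi> (indicator A :: 'a \<Rightarrow> real)"
  have meas: "(indicator A :: 'a \<Rightarrow> real) \<in> borel_measurable lebesgue" using A by simp
  have E: "{x. \<bar>indicator A x :: real\<bar> > s} = (if s < 1 then A else {})" if "s > 0" for s :: real
    using that by (auto simp: indicator_def)
  have "weak_orlicz_morrey_norm \<Phi> \<phi> (indicator A :: 'a \<Rightarrow> real) =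
     (SUP s\<in>{0<..}. ennreal s * (if s < 1 then ?M else 0))"
    unfolding wM_eq[OF Y meas] using E M_empty[OF Y] by (intro SUP_cong) auto
  also have "\<dots> = ?M"
  proof (rule antisym)
    show "(SUP s\<in>{0<..}. ennreal s * (if s < 1 then ?M else 0)) \<le> ?M"
    proof (rule SUP_least)
      fix s :: real assume s: "s \<in> {0<..}"
      show "ennreal s * (if s < 1 then ?M else 0) \<le> ?M"
      proof (cases "s < 1")
        case True
        then have "ennreal s * ?M \<le> 1 * ?M" by (intro mult_right_mono) auto
        then show ?thesis using True by simp
      qed simp
    qed
  next
    have "?M = (SUP s\<in>{0<..<1::real}. ennreal s) * ?M" by (simp add: SUP_ennreal_01)
    also have "\<dots> = (SUP s\<in>{0<..<1::real}. ennreal s * ?M)" by (rule SUP_mult_right_ennreal)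
    also have "\<dots> \<le> (SUP s\<in>{0<..}. ennreal s * (if s < 1 then ?M else 0))"
      by (rule SUP_mono) auto
    finally show "?M \<le> (SUP s\<in>{0<..}. ennreal s * (if s < 1 then ?M else 0))" .
  qed
  finally show ?thesis .
qed


theorem theorem1p12:
  fixes \<Phi> \<phi> :: "real \<Rightarrow> real" and \<psi> :: "real ^ 'n \<Rightarrow> real ^ 'n"
  assumes "young_function \<Phi>" and "G_dec_1 \<phi>"
    and "\<psi> \<in> lebesgue \<rightarrow>\<^sub>M lebesgue"
  shows "comp_bounded_weak_OM \<Phi> \<phi> \<psi> \<longleftrightarrow>
    (\<exists>K>0. \<forall>A \<in> sets lebesgue.
       orlicz_morrey_norm \<Phi> \<phi> (indicator (\<psi> -` A) :: real ^ 'n \<Rightarrow> real)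
         \<le> ennreal K * orlicz_morrey_norm \<Phi> \<phi> (indicator A :: real ^ 'n \<Rightarrow> real))"
proof
  assume "comp_bounded_weak_OM \<Phi> \<phi> \<psi>"
  then obtain C where C: "C > 0" and H: "\<And>f. f \<in> weak_orlicz_morrey \<Phi> \<phi> \<Longrightarrow>
      f \<circ> \<psi> \<in> weak_orlicz_morrey \<Phi> \<phi> \<and>
      weak_orlicz_morrey_norm \<Phi> \<phi> (f \<circ> \<psi>) \<le> ennreal C * weak_orlicz_morrey_norm \<Phi> \<phi> f"
    unfolding comp_bounded_weak_OM_def by blast
  show "\<exists>K>0. \<forall>A \<in> sets lebesgue.
       orlicz_morrey_norm \<Phi> \<phi> (indicator (\<psi> -` A) :: real ^ 'n \<Rightarrow> real)
         \<le> ennreal K * orlicz_morrey_norm \<Phi> \<phi> (indicator A :: real ^ 'n \<Rightarrow> real)"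
  proof (intro exI[of _ C] conjI ballI)
    show "C > 0" by (rule C)
    fix A :: "(real ^ 'n) set" assume A: "A \<in> sets lebesgue"
    have pre: "\<psi> -` A \<in> sets lebesgue"
      using measurable_sets[OF assms(3) A] by simp
    show "orlicz_morrey_norm \<Phi> \<phi> (indicator (\<psi> -` A) :: real ^ 'n \<Rightarrow> real)
         \<le> ennreal C * orlicz_morrey_norm \<Phi> \<phi> (indicator A :: real ^ 'n \<Rightarrow> real)"
    proof (cases "orlicz_morrey_norm \<Phi> \<phi> (indicator A :: real ^ 'n \<Rightarrow> real) = top")
      case True
      then show ?thesis using C by (simp add: ennreal_mult_top)
    next
      case False
      have "(indicator A :: real ^ 'n \<Rightarrow> real) \<in> weak_orlicz_morrey \<Phi> \<phi>"
        using A False wM_ind[OF assms(1) A] by (simp add: weak_orlicz_morrey_def top.not_eq_extremum)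
      from H[OF this] have "weak_orlicz_morrey_norm \<Phi> \<phi> ((indicator A :: real ^ 'n \<Rightarrow> real) \<circ> \<psi>)
          \<le> ennreal C * weak_orlicz_morrey_norm \<Phi> \<phi> (indicator A :: real ^ 'n \<Rightarrow> real)" by blast
      moreover have "(indicator A :: real ^ 'n \<Rightarrow> real) \<circ> \<psi> = indicator (\<psi> -` A)"
        by (auto simp: fun_eq_iff indicator_def)
      ultimately show ?thesis using wM_ind[OF assms(1) A] wM_ind[OF assms(1) pre] by simp
    qed
  qed
next
  assume "\<exists>K>0. \<forall>A \<in> sets lebesgue.
       orlicz_morrey_norm \<Phi> \<phi> (indicator (\<psi> -` A) :: real ^ 'n \<Rightarrow> real)
         \<le> ennreal K * orlicz_morrey_norm \<Phi> \<phi> (indicator A :: real ^ 'n \<Rightarrow> real)"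
  then obtain K where K: "K > 0" and HK: "\<And>A. A \<in> sets lebesgue \<Longrightarrow>
       orlicz_morrey_norm \<Phi> \<phi> (indicator (\<psi> -` A) :: real ^ 'n \<Rightarrow> real)
         \<le> ennreal K * orlicz_morrey_norm \<Phi> \<phi> (indicator A :: real ^ 'n \<Rightarrow> real)" by blast
  show "comp_bounded_weak_OM \<Phi> \<phi> \<psi>"
    unfolding comp_bounded_weak_OM_def
  proof (intro exI[of _ K] conjI ballI)
    show "K > 0" by (rule K)
    fix f :: "real ^ 'n \<Rightarrow> real" assume "f \<in> weak_orlicz_morrey \<Phi> \<phi>"
    then have f: "f \<in> borel_measurable lebesgue" and fin: "weak_orlicz_morrey_norm \<Phi> \<phi> f < \<infinity>"
      unfolding weak_orlicz_morrey_def by auto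
    have fc: "f \<circ> \<psi> \<in> borel_measurable lebesgue"
      by (rule measurable_comp[OF assms(3) f])
    have abs_meas: "(\<lambda>x. \<bar>f x\<bar>) \<in> borel_measurable lebesgue" using f by measurable
    have lev: "{x. \<bar>f x\<bar> > s} \<in> sets lebesgue" for s
      using borel_measurable_iff_greater[of "\<lambda>x. \<bar>f x\<bar>" lebesgue] abs_meas by simp
    have pre: "{x. \<bar>(f \<circ> \<psi>) x\<bar> > s} = \<psi> -` {x. \<bar>f x\<bar> > s}" for s by auto
    have "weak_orlicz_morrey_norm \<Phi> \<phi> (f \<circ> \<psi>) =
        (SUP s\<in>{0<..}. ennreal s * orlicz_morrey_norm \<Phi> \<phi> (indicator (\<psi> -` {x. \<bar>f x\<bar> > s})))"
      unfolding wM_eq[OF assms(1) fc] pre ..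
    also have "\<dots> \<le> (SUP s\<in>{0<..}. ennreal s * (ennreal K * orlicz_morrey_norm \<Phi> \<phi> (indicator {x. \<bar>f x\<bar> > s})))"
    proof (rule SUP_mono)
      fix s :: real assume s: "s \<in> {0<..}"
      have "ennreal s * orlicz_morrey_norm \<Phi> \<phi> (indicator (\<psi> -` {x. \<bar>f x\<bar> > s}))
         \<le> ennreal s * (ennreal K * orlicz_morrey_norm \<Phi> \<phi> (indicator {x. \<bar>f x\<bar> > s}))"
        by (intro mult_left_mono HK lev) simp
      then show "\<exists>t\<in>{0<..}. ennreal s * orlicz_morrey_norm \<Phi> \<phi> (indicator (\<psi> -` {x. \<bar>f x\<bar> > s}))
         \<le> ennreal t * (ennreal K * orlicz_morrey_norm \<Phi> \<phi> (indicator {x. \<bar>f x\<bar> > t}))"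
        using s by blast
    qed
    also have "\<dots> = ennreal K * weak_orlicz_morrey_norm \<Phi> \<phi> f"
      unfolding wM_eq[OF assms(1) f] SUP_mult_left_ennreal by (simp add: mult.left_commute)
    finally have le: "weak_orlicz_morrey_norm \<Phi> \<phi> (f \<circ> \<psi>) \<le> ennreal K * weak_orlicz_morrey_norm \<Phi> \<phi> f" .
    moreover have "ennreal K * weak_orlicz_morrey_norm \<Phi> \<phi> f < \<infinity>"
      using fin by (simp add: ennreal_mult_less_top)
    ultimately have "weak_orlicz_morrey_norm \<Phi> \<phi> (f \<circ> \<psi>) < \<infinity>" by (rule le_less_trans)
    then show "f \<circ> \<psi> \<in> weak_orlicz_morrey \<Phi> \<phi>" unfolding weak_orlicz_morrey_def using fc by simp
    show "weak_orlicz_morrey_norm \<Phi> \<phi> (f \<circ> \<psi>) \<le> ennreal K * weak_orlicz_morrey_norm \<Phi> \<phi> f" by (rule le)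
  qed
qed

end
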